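(* Let $a_0,b_0,C_0,C_1,g_3,z_0$ be complex constants with $b_0\neq0$, put $$g_2=\frac{C_0^2+24C_1b_0}{12b_0^2},$$ and let $R(z)=\wp(z-z_0;g_2,g_3)$. Then the function $$y(z)=-\frac{C_0}{12b_0}+R(z)$$ is a solution of the third order ordinary differential equation $$a_0y_{zzz}-12a_0yy_z+b_0y_{zz}-\frac{a_0C_0}{b_0}y_z-6b_0y^2-C_0y+C_1=0 .$$
   Context: $\wp(z;g_2,g_3)$ denotes the Weierstrass elliptic function with invariants $g_2,g_3$, the general solution (up to translation of $z$) of $R_z^2-4R^3+g_2R+g_3=0$; subscripts $z$ denote derivatives with respect to $z$. *)

theory Defs
  imports "HOL-Complex_Analysis.Complex_Analysis"
begin

text \<open>A branch of the Weierstrass function wp(.; g2, g3): a non-constant holomorphic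
  solution on an open connected region S (avoiding poles) of
  R_z^2 = 4 R^3 - g2 R - g3. By the context, every non-constant solution is a
  translate of wp, and conversely wp restricted to any such region is one.\<close>
definition weierstrass_branch ::
  "complex \<Rightarrow> complex \<Rightarrow> (complex \<Rightarrow> complex) \<Rightarrow> complex set \<Rightarrow> bool" where
  "weierstrass_branch g2 g3 P S \<longleftrightarrow>
     open S \<and> connected S \<and> P holomorphic_on S \<and>
     \<not> (\<exists>c. \<forall>w\<in>S. P w = c) \<and>
     (\<forall>w\<in>S. (deriv P w)^2 = 4 * (P w)^3 - g2 * P w - g3)"

end

theory Submission
  imports Defs
begin

lemma deriv_eq_open:
  assumes "open S" "w \<in> S" "\<And>x. x \<in> S \<Longrightarrow> g1 x = g2 x"
  shows "deriv g1 w = deriv g2 w"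
proof (rule deriv_cong_ev)
  show "\<forall>\<^sub>F x in nhds w. g1 x = g2 x"
    using assms using eventually_nhds by blast
qed simp

lemma wp_facts:
  assumes "weierstrass_branch g2 g3 P S"
  shows "\<forall>w\<in>S. deriv (deriv P) w = 6 * (P w)^2 - g2/2
        \<and> deriv (deriv (deriv P)) w = 12 * P w * deriv P w"
proof -
  have oS: "open S" and cS: "connected S" and hP: "P holomorphic_on S"
    and nc: "\<not> (\<exists>c. \<forall>w\<in>S. P w = c)"
    and ode: "\<And>w. w \<in> S \<Longrightarrow> (deriv P w)^2 = 4 * (P w)^3 - g2 * P w - g3"
    using assms unfolding weierstrass_branch_def by auto
  define f where "f = deriv P"
  define f2 where "f2 = deriv f"
  have hf: "f holomorphic_on S" unfolding f_def using hP oS by (rule holomorphic_deriv)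
  have hf2: "f2 holomorphic_on S" unfolding f2_def using hf oS by (rule holomorphic_deriv)
  have dP: "(P has_field_derivative f w) (at w)" if "w \<in> S" for w
    unfolding f_def using hP oS that holomorphic_derivI by blast
  have df: "(f has_field_derivative f2 w) (at w)" if "w \<in> S" for w
    unfolding f2_def using hf oS that holomorphic_derivI by blast
  have key: "f w * (2 * f2 w - 12 * (P w)^2 + g2) = 0" if w: "w \<in> S" for w
  proof -
    have d1: "((\<lambda>x. (f x)^2) has_field_derivative 2 * f w * f2 w) (at w)"
      by (rule derivative_eq_intros df[OF w] refl)+ (simp add: algebra_simps)
    have d2: "((\<lambda>x. 4 * (P x)^3 - g2 * P x - g3) has_field_derivative
                (12 * (P w)^2 - g2) * f w) (at w)"
      by (rule derivative_eq_intros dP[OF w] refl)+ (simp add: algebra_simps)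
    have d2': "((\<lambda>x. (f x)^2) has_field_derivative (12 * (P w)^2 - g2) * f w) (at w)"
      using has_field_derivative_transform_within_open[OF d2 oS w] ode unfolding f_def by auto
    have "2 * f w * f2 w = (12 * (P w)^2 - g2) * f w"
      using DERIV_unique[OF d1 d2'] .
    then show ?thesis by (simp add: algebra_simps)
  qed
  obtain w0 where w0: "w0 \<in> S" "f w0 \<noteq> 0"
  proof (rule ccontr)
    assume "\<not> thesis"
    then have z: "\<forall>x\<in>S. f x = 0" using that by auto
    have "continuous_on S P" using hP holomorphic_on_imp_continuous_on by blast
    moreover have "\<forall>x\<in>S - {}. DERIV P x :> 0" using dP z by auto
    ultimately obtain c where "\<And>x. x \<in> S \<Longrightarrow> P x = c"
      using DERIV_zero_connected_constant[OF cS oS, of "{}" P] by auto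
    then show False using nc by auto
  qed
  define U where "U = S \<inter> f -` (- {0})"
  have oU: "open U" unfolding U_def
    using continuous_open_preimage[OF holomorphic_on_imp_continuous_on[OF hf] oS] by auto
  have hh: "(\<lambda>w. 2 * f2 w - 12 * (P w)^2 + g2) holomorphic_on S"
    using hf2 hP by (intro holomorphic_intros)
  have Une: "U \<noteq> {}" using w0 U_def by auto
  have US: "U \<subseteq> S" using U_def by auto
  have Uz: "2 * f2 z - 12 * (P z)^2 + g2 = 0" if "z \<in> U" for z
      using key[of z] that U_def by auto
  have h0: "2 * f2 w - 12 * (P w)^2 + g2 = 0" if "w \<in> S" for w
    apply (rule analytic_continuation_open[of U S "\<lambda>w. 2 * f2 w - 12 * (P w)^2 + g2" "\<lambda>_. 0" w])
    apply (rule oU) apply (rule oS) apply (rule Une) apply (rule cS) apply (rule US) apply (rule hh)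
    apply (rule holomorphic_on_const) apply (simp add: Uz) apply (rule that) done
  have D2: "f2 w = 6 * (P w)^2 - g2/2" if "w \<in> S" for w
    using h0[OF that] by (simp add: field_simps)
  have D3: "deriv f2 w = 12 * P w * f w" if w: "w \<in> S" for w
  proof -
    have "deriv f2 w = deriv (\<lambda>x. 6 * (P x)^2 - g2/2) w"
      by (rule deriv_eq_open[OF oS w]) (rule D2)
    also have "\<dots> = 12 * P w * f w"
    proof (rule DERIV_imp_deriv)
      show "((\<lambda>x. 6 * (P x)^2 - g2/2) has_field_derivative 12 * P w * f w) (at w)"
        by (rule derivative_eq_intros dP[OF w] refl)+ (simp add: algebra_simps)
    qed
    finally show ?thesis .
  qed
  show ?thesis using D2 D3 unfolding f2_def f_def by auto
qed


lemma shift_deriv: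
  assumes "open S" "g holomorphic_on S" "z - z0 \<in> S"
  shows "((\<lambda>z. g (z - z0)) has_field_derivative deriv g (z - z0)) (at z)"
proof -
  have d: "(g has_field_derivative deriv g (z - z0)) (at (z - z0))"
    using assms holomorphic_derivI by blast
  have "((\<lambda>z. z - z0) has_field_derivative 1) (at z)"
    by (rule derivative_eq_intros refl)+ simp
  from DERIV_chain2[OF d this] show ?thesis by simp
qed

theorem mainTheorem3:
  fixes a0 b0 C0 C1 g3 z0 :: complex
    and P :: "complex \<Rightarrow> complex" and S :: "complex set"
  assumes "b0 \<noteq> 0"
    and "weierstrass_branch ((C0^2 + 24 * C1 * b0) / (12 * b0^2)) g3 P S"
  shows "\<forall>z. z - z0 \<in> S \<longrightarrow>
    (let y = (\<lambda>z. - C0 / (12 * b0) + P (z - z0)) in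
      a0 * (deriv ^^ 3) y z - 12 * a0 * y z * deriv y z + b0 * (deriv ^^ 2) y z
      - a0 * C0 / b0 * deriv y z - 6 * b0 * (y z)^2 - C0 * y z + C1 = 0)"
proof (intro allI impI)
  fix z assume zS: "z - z0 \<in> S"
  define g2 where "g2 = (C0^2 + 24 * C1 * b0) / (12 * b0^2)"
  have wb: "weierstrass_branch g2 g3 P S" using assms(2) g2_def by simp
  have oS: "open S" and hP: "P holomorphic_on S"
    using wb unfolding weierstrass_branch_def by auto
  have hP1: "deriv P holomorphic_on S" using hP oS by (rule holomorphic_deriv)
  have hP2: "deriv (deriv P) holomorphic_on S" using hP1 oS by (rule holomorphic_deriv)
  have F: "\<forall>w\<in>S. deriv (deriv P) w = 6 * (P w)^2 - g2/2
        \<and> deriv (deriv (deriv P)) w = 12 * P w * deriv P w"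
    using wp_facts[OF wb] .
  define T where "T = (\<lambda>z. z - z0) -` S"
  have oT: "open T" unfolding T_def
    by (intro open_vimage oS continuous_intros)
  have zT: "z \<in> T" using zS T_def by simp
  define c where "c = - C0 / (12 * b0)"
  define y where "y = (\<lambda>z. c + P (z - z0))"
  have E1: "deriv y x = deriv P (x - z0)" if "x \<in> T" for x
  proof (rule DERIV_imp_deriv)
    have "x - z0 \<in> S" using that T_def by simp
    note sd = shift_deriv[OF oS hP this]
    show "(y has_field_derivative deriv P (x - z0)) (at x)"
      unfolding y_def using DERIV_add[OF DERIV_const sd, of c] by simp
  qed
  have E2: "deriv (deriv y) x = deriv (deriv P) (x - z0)" if "x \<in> T" for x
  proof -
    have "deriv (deriv y) x = deriv (\<lambda>x. deriv P (x - z0)) x"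
      by (rule deriv_eq_open[OF oT that]) (rule E1)
    also have "\<dots> = deriv (deriv P) (x - z0)"
      using that T_def by (intro DERIV_imp_deriv shift_deriv[OF oS hP1]) auto
    finally show ?thesis .
  qed
  have E3: "deriv (deriv (deriv y)) z = deriv (deriv (deriv P)) (z - z0)"
  proof -
    have "deriv (deriv (deriv y)) z = deriv (\<lambda>x. deriv (deriv P) (x - z0)) z"
      by (rule deriv_eq_open[OF oT zT]) (rule E2)
    also have "\<dots> = deriv (deriv (deriv P)) (z - z0)"
      using zS by (intro DERIV_imp_deriv shift_deriv[OF oS hP2])
    finally show ?thesis .
  qed
  have p3: "(deriv ^^ 3) y = deriv (deriv (deriv y))" by (simp add: numeral_3_eq_3)
  have p2: "(deriv ^^ 2) y = deriv (deriv y)" by (simp add: numeral_2_eq_2)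
  define R where "R = P (z - z0)"
  define R1 where "R1 = deriv P (z - z0)"
  have yz: "y z = c + R" unfolding y_def R_def by simp
  have D2: "deriv (deriv P) (z - z0) = 6 * R^2 - g2/2" using F zS R_def by auto
  have D3: "deriv (deriv (deriv P)) (z - z0) = 12 * R * R1" using F zS R_def R1_def by auto
  have "a0 * (12 * R * R1) - 12 * a0 * (c + R) * R1 + b0 * (6 * R^2 - g2/2)
      - a0 * C0 / b0 * R1 - 6 * b0 * (c + R)^2 - C0 * (c + R) + C1 = 0"
    unfolding c_def g2_def using assms(1)
    by (simp add: field_simps power2_eq_square)
  then have "a0 * (deriv ^^ 3) y z - 12 * a0 * y z * deriv y z + b0 * (deriv ^^ 2) y z
      - a0 * C0 / b0 * deriv y z - 6 * b0 * (y z)^2 - C0 * y z + C1 = 0"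
    unfolding p3 p2 E3 E2[OF zT] E1[OF zT] yz D2 D3 R1_def by simp
  then show "let y = (\<lambda>z. - C0 / (12 * b0) + P (z - z0)) in
      a0 * (deriv ^^ 3) y z - 12 * a0 * y z * deriv y z + b0 * (deriv ^^ 2) y z
      - a0 * C0 / b0 * deriv y z - 6 * b0 * (y z)^2 - C0 * y z + C1 = 0"
    unfolding y_def c_def Let_def .
qed

end
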